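(* Let $\psi\colon\mathbb R^2\to\mathbb R$ be smooth and $p_\ast\in\mathbb R^2$ be such that conditions 1–7 below hold with $N=2$. Let $\mathsf X:=\mathbb R^2\times\mathbb S^1$ and for $\varepsilon>0$ define $V_\varepsilon\colon\mathsf X\to\mathbb R$ by $V_\varepsilon([p,o]):=y_\ast-\psi(p)+\varepsilon\langle\nabla\psi(p),o-o_\perp\rangle^2$. Let $z_\ast:=y_\ast-\underline y\in(0,\infty]$. Then there exists $\varepsilon_1>0$ such that for every $\varepsilon\in(0,\varepsilon_1)$: (i) $0<V_\varepsilon(x)<z_\ast$ for every $x=[p,o]\in\mathsf X$ with $p\ne p_\ast$; (ii) the sublevel set $\{x\in\mathsf X: V_\varepsilon(x)\le z\}$ is compact for every $z\in(0,z_\ast)$.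
   Context: $\mathbb S^1$ is the unit circle in $\mathbb R^2$; for $o\in\mathbb S^1$, $o_\perp\in\mathbb S^1$ is the unique element such that $(o,o_\perp)$ is a positively oriented orthonormal basis of $\mathbb R^2$. Notation: $y_\ast:=\psi(p_\ast)$, $\underline y:=\inf_{p}\psi(p)\in\mathbb R\cup\{-\infty\}$, $|\nabla^2\psi(p)|$ the operator norm of the Hessian, $\psi^{-1}(\ge y):=\{p:\psi(p)\ge y\}$. Conditions: (1) $\psi(p)<y_\ast$ for all $p\ne p_\ast$; (2) $\nabla^2\psi(p_\ast)$ negative definite; (3) there is $r_1>0$ with $\psi(p_\ast+v)=\psi(p_\ast-v)$ for $|v|\le r_1$; (4) there is $c_1>0$ with $|\nabla^2\psi(p)|\le c_1$ for all $p$; (5) $\nabla\psi(p)\ne0$ for $p\ne p_\ast$; (6) for every $y\in(\underline y,y_\ast)$, $\psi^{-1}(\ge y)$ is compact; (7) there are $c_2,r_2,r_3>0$ with $|\nabla^2\psi(p+v)|\le c_2|\nabla\psi(p)|$ for all $|p-p_\ast|\ge r_2$, $|v|\le r_3$. *)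

theory Defs
  imports "HOL-Analysis.Analysis"
begin

fun Ck :: "nat \<Rightarrow> ('a::euclidean_space \<Rightarrow> real) \<Rightarrow> bool" where
  "Ck 0 f = continuous_on UNIV f"
| "Ck (Suc k) f = ((\<forall>x. f differentiable (at x)) \<and>
      (\<forall>i\<in>Basis. Ck k (\<lambda>x. frechet_derivative f (at x) i)))"

definition smooth :: "('a::euclidean_space \<Rightarrow> real) \<Rightarrow> bool" where
  "smooth f \<longleftrightarrow> (\<forall>k. Ck k f)"

definition grad :: "(real^2 \<Rightarrow> real) \<Rightarrow> real^2 \<Rightarrow> real^2" where
  "grad f p = (\<chi> i. frechet_derivative f (at p) (axis i 1))"

definition hess :: "(real^2 \<Rightarrow> real) \<Rightarrow> real^2 \<Rightarrow> real^2^2" where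
  "hess f p = (\<chi> i j. frechet_derivative (\<lambda>q. grad f q $ j) (at p) (axis i 1))"

definition mnorm :: "real^2^2 \<Rightarrow> real" where
  "mnorm A = onorm (\<lambda>v. A *v v)"

definition neg_definite :: "real^2^2 \<Rightarrow> bool" where
  "neg_definite A \<longleftrightarrow> (\<forall>v. v \<noteq> 0 \<longrightarrow> v \<bullet> (A *v v) < 0)"

text \<open>o_perp: (o, o_perp) positively oriented orthonormal basis, i.e. rotation by +90 degrees.\<close>
definition perp :: "real^2 \<Rightarrow> real^2" where
  "perp u = vector [- (u $ 2), u $ 1]"

definition Veps :: "(real^2 \<Rightarrow> real) \<Rightarrow> real^2 \<Rightarrow> real \<Rightarrow> real^2 \<Rightarrow> real^2 \<Rightarrow> real" where
  "Veps \<psi> pstar \<epsilon> p u = \<psi> pstar - \<psi> p + \<epsilon> * (grad \<psi> p \<bullet> (u - perp u))\<^sup>2"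

end

theory Submission
  imports Defs
begin

lemma grad_nth: "grad \<psi> q $ j = frechet_derivative \<psi> (at q) (axis j 1)" unfolding grad_def by (rule vec_lambda_beta)

lemma hess_nth: "hess \<psi> q $ i $ j = frechet_derivative (\<lambda>q. grad \<psi> q $ j) (at q) (axis i 1)" unfolding hess_def by simp

lemma vec2_expand: "(v::real^2) = v$1 *\<^sub>R axis 1 1 + v$2 *\<^sub>R axis 2 1"
  by (simp add: vec_eq_iff axis_def forall_2)

lemma lin2: assumes "linear (D :: real^2 \<Rightarrow> real)"
  shows "D v = v$1 * D (axis 1 1) + v$2 * D (axis 2 1)"
proof -
  have "D v = D (v$1 *\<^sub>R axis 1 1 + v$2 *\<^sub>R axis 2 1)" using vec2_expand[of v] by simp
  also have "\<dots> = v$1 * D (axis 1 1) + v$2 * D (axis 2 1)"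
    using assms by (simp add: linear_add linear_scale)
  finally show ?thesis .
qed

lemma smooth_parts:
  assumes "smooth \<psi>"
  shows "\<And>x. \<psi> differentiable (at x)"
    and "\<And>j x. (\<lambda>q. grad \<psi> q $ j) differentiable (at x)"
proof -
  have C2: "Ck (Suc (Suc 0)) \<psi>" using assms unfolding smooth_def by blast
  then have A: "(\<forall>x. \<psi> differentiable (at x)) \<and>
      (\<forall>i\<in>Basis. Ck (Suc 0) (\<lambda>x. frechet_derivative \<psi> (at x) i))"
    using C2 Ck.simps(2)[of "Suc 0" \<psi>] by blast
  then show "\<And>x. \<psi> differentiable (at x)" by blast
  fix j x
  have "axis j 1 \<in> (Basis :: (real^2) set)" unfolding Basis_vec_def Basis_real_def by blast
  then have "Ck (Suc 0) (\<lambda>x. frechet_derivative \<psi> (at x) (axis j 1))"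
    using A by blast
  then have "\<forall>x. (\<lambda>x. frechet_derivative \<psi> (at x) (axis j 1)) differentiable (at x)"
    using Ck.simps(2)[of 0] by blast
  then show "(\<lambda>q. grad \<psi> q $ j) differentiable (at x)" unfolding grad_nth by blast
qed

lemma grad_deriv:
  assumes "\<psi> differentiable (at x)"
  shows "(\<psi> has_derivative (\<lambda>h. grad \<psi> x \<bullet> h)) (at x)"
proof -
  have d: "(\<psi> has_derivative frechet_derivative \<psi> (at x)) (at x)"
    using assms frechet_derivative_works by blast
  then have l: "linear (frechet_derivative \<psi> (at x))"
    using has_derivative_linear by blast
  have "frechet_derivative \<psi> (at x) = (\<lambda>h. grad \<psi> x \<bullet> h)"
    by (rule ext, subst lin2[OF l]) (simp add: grad_def inner_vec_def sum_2 mult.commute)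
  with d show ?thesis by simp
qed

lemma gradj_deriv:
  assumes "(\<lambda>q. grad \<psi> q $ j) differentiable (at x)"
  shows "((\<lambda>q. grad \<psi> q $ j) has_derivative (\<lambda>h. h$1 * hess \<psi> x $ 1 $ j + h$2 * hess \<psi> x $ 2 $ j)) (at x)"
proof -
  let ?g = "\<lambda>q. grad \<psi> q $ j"
  have d: "(?g has_derivative frechet_derivative ?g (at x)) (at x)"
    using assms frechet_derivative_works by blast
  then have l: "linear (frechet_derivative ?g (at x))"
    using has_derivative_linear by blast
  have "frechet_derivative ?g (at x) = (\<lambda>h. h$1 * hess \<psi> x $ 1 $ j + h$2 * hess \<psi> x $ 2 $ j)"
    by (rule ext, subst lin2[OF l]) (simp add: hess_def)
  with d show ?thesis by simp
qed

lemma line_deriv: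
  "((\<lambda>s::real. p + s *\<^sub>R v) has_derivative (\<lambda>s. s *\<^sub>R v)) (at s)"
  by (auto intro!: derivative_eq_intros)

lemma F_deriv:
  assumes "smooth \<psi>"
  shows "((\<lambda>s. \<psi> (p + s *\<^sub>R v)) has_real_derivative (grad \<psi> (p + s *\<^sub>R v) \<bullet> v)) (at s)"
proof -
  have "((\<lambda>s. \<psi> (p + s *\<^sub>R v)) has_derivative (\<lambda>h. grad \<psi> (p + s *\<^sub>R v) \<bullet> (h *\<^sub>R v))) (at s)"
    using has_derivative_compose[OF line_deriv grad_deriv[OF smooth_parts(1)[OF assms]]] .
  then show ?thesis
    by (rule has_derivative_imp_has_field_derivative) simp
qed

lemma F1_deriv:
  assumes "smooth \<psi>"
  shows "((\<lambda>s. grad \<psi> (p + s *\<^sub>R v) \<bullet> v) has_real_derivative (v \<bullet> (hess \<psi> (p + s *\<^sub>R v) *v v))) (at s)"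
proof -
  let ?q = "p + s *\<^sub>R v"
  have dj: "((\<lambda>s. grad \<psi> (p + s *\<^sub>R v) $ j) has_derivative
     (\<lambda>h. (h *\<^sub>R v)$1 * hess \<psi> ?q $ 1 $ j + (h *\<^sub>R v)$2 * hess \<psi> ?q $ 2 $ j)) (at s)" for j
    using has_derivative_compose[OF line_deriv gradj_deriv[OF smooth_parts(2)[OF assms]]] .
  have e: "(\<lambda>s. grad \<psi> (p + s *\<^sub>R v) \<bullet> v) = (\<lambda>s. grad \<psi> (p + s *\<^sub>R v) $ 1 * v$1 + grad \<psi> (p + s *\<^sub>R v) $ 2 * v$2)"
    by (simp add: inner_vec_def sum_2)
  have "((\<lambda>s. grad \<psi> (p + s *\<^sub>R v) $ 1 * v$1 + grad \<psi> (p + s *\<^sub>R v) $ 2 * v$2) has_derivative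
     (\<lambda>h. ((h *\<^sub>R v)$1 * hess \<psi> ?q $ 1 $ 1 + (h *\<^sub>R v)$2 * hess \<psi> ?q $ 2 $ 1) * v$1
        + ((h *\<^sub>R v)$1 * hess \<psi> ?q $ 1 $ 2 + (h *\<^sub>R v)$2 * hess \<psi> ?q $ 2 $ 2) * v$2)) (at s)"
    by (intro has_derivative_add has_derivative_mult_left dj)
  then have "((\<lambda>s. grad \<psi> (p + s *\<^sub>R v) \<bullet> v) has_derivative
     (\<lambda>h. ((h *\<^sub>R v)$1 * hess \<psi> ?q $ 1 $ 1 + (h *\<^sub>R v)$2 * hess \<psi> ?q $ 2 $ 1) * v$1
        + ((h *\<^sub>R v)$1 * hess \<psi> ?q $ 1 $ 2 + (h *\<^sub>R v)$2 * hess \<psi> ?q $ 2 $ 2) * v$2)) (at s)"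
    unfolding e .
  then show ?thesis
    by (rule has_derivative_imp_has_field_derivative)
       (simp add: inner_vec_def sum_2 matrix_vector_mult_def algebra_simps)
qed

lemma F2_bound:
  assumes "mnorm A \<le> c"
  shows "\<bar>v \<bullet> (A *v v)\<bar> \<le> c * (norm v)^2"
proof -
  have a: "\<bar>v \<bullet> (A *v v)\<bar> \<le> norm v * norm (A *v v)" by (rule Cauchy_Schwarz_ineq2)
  have b: "norm (A *v v) \<le> mnorm A * norm v"
    unfolding mnorm_def by (rule onorm[OF matrix_vector_mul_bounded_linear])
  have c: "mnorm A * norm v \<le> c * norm v" using assms by (simp add: mult_right_mono)
  have "norm v * norm (A *v v) \<le> norm v * (c * norm v)"
    using b c by (intro mult_left_mono) auto
  then show ?thesis using a by (simp add: power2_eq_square algebra_simps)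
qed

lemma descent:
  assumes sm: "smooth \<psi>" and hb: "\<And>q. mnorm (hess \<psi> q) \<le> c" and t: "0 < t"
  shows "\<psi> (p + t *\<^sub>R v) \<le> \<psi> p + t * (grad \<psi> p \<bullet> v) + c * (norm v)^2 * t^2"
proof -
  obtain z where z: "0 < z" "z < t"
    and ez: "\<psi> (p + t *\<^sub>R v) - \<psi> (p + 0 *\<^sub>R v) = (t - 0) * (grad \<psi> (p + z *\<^sub>R v) \<bullet> v)"
    using MVT2[of 0 t "\<lambda>s. \<psi> (p + s *\<^sub>R v)" "\<lambda>s. grad \<psi> (p + s *\<^sub>R v) \<bullet> v"] t F_deriv[OF sm]
    by blast
  obtain w where w: "0 < w" "w < z"
    and ew: "grad \<psi> (p + z *\<^sub>R v) \<bullet> v - grad \<psi> (p + 0 *\<^sub>R v) \<bullet> v = (z - 0) * (v \<bullet> (hess \<psi> (p + w *\<^sub>R v) *v v))"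
    using MVT2[of 0 z "\<lambda>s. grad \<psi> (p + s *\<^sub>R v) \<bullet> v" "\<lambda>s. v \<bullet> (hess \<psi> (p + s *\<^sub>R v) *v v)"] z F1_deriv[OF sm]
    by blast
  have "v \<bullet> (hess \<psi> (p + w *\<^sub>R v) *v v) \<le> c * (norm v)^2"
    using F2_bound[OF hb] abs_le_D1 by blast
  then have "z * (v \<bullet> (hess \<psi> (p + w *\<^sub>R v) *v v)) \<le> z * (c * (norm v)^2)"
    using z by (intro mult_left_mono) auto
  also have "\<dots> \<le> t * (c * (norm v)^2)"
  proof -
    have "0 \<le> c" using hb[of p] onorm_pos_le[OF matrix_vector_mul_bounded_linear] unfolding mnorm_def
      by (meson order_trans)
    then show ?thesis using z by (intro mult_right_mono) auto
  qed
  finally have "grad \<psi> (p + z *\<^sub>R v) \<bullet> v \<le> grad \<psi> p \<bullet> v + t * (c * (norm v)^2)"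
    using ew by simp
  then have "t * (grad \<psi> (p + z *\<^sub>R v) \<bullet> v) \<le> t * (grad \<psi> p \<bullet> v + t * (c * (norm v)^2))"
    using t by (intro mult_left_mono) auto
  then show ?thesis using ez by (simp add: algebra_simps power2_eq_square)
qed

lemma descent2:
  assumes sm: "smooth \<psi>" and hb: "\<And>q. mnorm (hess \<psi> q) \<le> c" and c: "0 < c"
  shows "\<psi> (p - (1/(2*c)) *\<^sub>R grad \<psi> p) \<le> \<psi> p - (norm (grad \<psi> p))^2 / (4*c)"
proof -
  let ?g = "grad \<psi> p"
  have "\<psi> (p + (1/(2*c)) *\<^sub>R (- ?g)) \<le> \<psi> p + (1/(2*c)) * (?g \<bullet> (- ?g)) + c * (norm (- ?g))^2 * (1/(2*c))^2"
    using descent[OF sm hb, of "1/(2*c)" p "- ?g"] c by simp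
  also have "\<dots> = \<psi> p - (norm ?g)^2 / (4*c)"
    using c by (simp add: field_simps power2_eq_square flip: power2_norm_eq_inner)
  finally show ?thesis by (simp add: algebra_simps)
qed

lemma perp_norm: assumes "u \<in> sphere (0::real^2) 1" shows "(norm (u - perp u))^2 = 2"
proof -
  have "(norm u)^2 = 1" using assms by simp
  then have "u$1 * u$1 + u$2 * u$2 = 1" by (simp add: power2_norm_eq_inner inner_vec_def sum_2)
  then show ?thesis
    by (simp add: power2_norm_eq_inner inner_vec_def sum_2 perp_def algebra_simps)
qed

lemma perp_linear: "linear perp"
  by (rule linearI) (simp_all add: perp_def vec_eq_iff forall_2)

lemma perp_cont: "continuous_on UNIV perp"
  using perp_linear by (simp add: linear_continuous_on linear_conv_bounded_linear)

lemma Veps_cont: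
  assumes "smooth \<psi>"
  shows "continuous_on UNIV (\<lambda>x. Veps \<psi> ps e (fst x) (snd x))"
proof -
  have c1: "continuous_on UNIV \<psi>"
    using smooth_parts(1)[OF assms]
    by (meson continuous_at_imp_continuous_on differentiable_imp_continuous_within)
  have "\<And>j. continuous_on UNIV (\<lambda>q. grad \<psi> q $ j)"
    using smooth_parts(2)[OF assms] by (meson continuous_at_imp_continuous_on differentiable_imp_continuous_within)
  then have "continuous_on UNIV (\<lambda>q. \<chi> j. grad \<psi> q $ j)" by (rule continuous_on_vec_lambda)
  then have c2: "continuous_on UNIV (grad \<psi>)" by (simp only: vec_nth_inverse)
  have c3: "continuous_on UNIV (\<lambda>x. \<psi> (fst x))"
    using continuous_on_compose2[OF c1 continuous_on_fst[OF continuous_on_id]] by simp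
  have c4: "continuous_on UNIV (\<lambda>x::((real^2) \<times> (real^2)). grad \<psi> (fst x))"
    using continuous_on_compose2[OF c2 continuous_on_fst[OF continuous_on_id]] by simp
  have c5: "continuous_on UNIV (\<lambda>x::((real^2) \<times> (real^2)). perp (snd x))"
    using continuous_on_compose2[OF perp_cont continuous_on_snd[OF continuous_on_id]] by simp
  show ?thesis unfolding Veps_def
    by (intro continuous_intros c3 c4 c5)
qed

theorem lemma1:
  fixes \<psi> :: "real^2 \<Rightarrow> real" and pstar :: "real^2"
  assumes sm: "smooth \<psi>"
    and c1: "\<And>p. p \<noteq> pstar \<Longrightarrow> \<psi> p < \<psi> pstar"
    and c2: "neg_definite (hess \<psi> pstar)"
    and c3: "\<exists>r1>0. \<forall>v. norm v \<le> r1 \<longrightarrow> \<psi> (pstar + v) = \<psi> (pstar - v)"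
    and c4: "\<exists>c1>0. \<forall>p. mnorm (hess \<psi> p) \<le> c1"
    and c5: "\<And>p. p \<noteq> pstar \<Longrightarrow> grad \<psi> p \<noteq> 0"
    and c6: "\<And>y. Inf (range (\<lambda>p. ereal (\<psi> p))) < ereal y \<Longrightarrow> y < \<psi> pstar
               \<Longrightarrow> compact {p. \<psi> p \<ge> y}"
    and c7: "\<exists>c2>0. \<exists>r2>0. \<exists>r3>0. \<forall>p v. norm (p - pstar) \<ge> r2 \<longrightarrow> norm v \<le> r3 \<longrightarrow>
               mnorm (hess \<psi> (p + v)) \<le> c2 * norm (grad \<psi> p)"
  shows "\<exists>\<epsilon>1>0. \<forall>\<epsilon>. 0 < \<epsilon> \<and> \<epsilon> < \<epsilon>1 \<longrightarrow>
           (\<forall>p u. u \<in> sphere 0 1 \<and> p \<noteq> pstar \<longrightarrow>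
              0 < Veps \<psi> pstar \<epsilon> p u \<and>
              ereal (Veps \<psi> pstar \<epsilon> p u) < ereal (\<psi> pstar) - Inf (range (\<lambda>p. ereal (\<psi> p)))) \<and>
           (\<forall>z. 0 < z \<and> ereal z < ereal (\<psi> pstar) - Inf (range (\<lambda>p. ereal (\<psi> p))) \<longrightarrow>
              compact {(p, u). u \<in> sphere 0 1 \<and> Veps \<psi> pstar \<epsilon> p u \<le> z})"
proof -
  obtain c where c: "c > 0" and hb: "\<And>p. mnorm (hess \<psi> p) \<le> c" using c4 by blast
  define I where "I = Inf (range (\<lambda>p. ereal (\<psi> p)))"
  have Ilow: "I \<le> ereal (\<psi> q)" for q unfolding I_def by (rule Inf_lower) simp
  show ?thesis
  proof (intro exI[of _ "1/(8*c)"] conjI allI impI)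
    show "0 < 1/(8*c)" using c by simp
  next
    fix e :: real and p u :: "real^2"
    assume e: "0 < e \<and> e < 1/(8*c)" and pu: "u \<in> sphere 0 1 \<and> p \<noteq> pstar"
    let ?g = "grad \<psi> p"
    have sq: "(?g \<bullet> (u - perp u))^2 \<le> 2 * (norm ?g)^2"
    proof -
      have "(?g \<bullet> (u - perp u))^2 \<le> (norm ?g * norm (u - perp u))^2"
        by (metis abs_le_square_iff Cauchy_Schwarz_ineq2 abs_mult abs_norm_cancel)
      also have "\<dots> = 2 * (norm ?g)^2" using perp_norm[of u] pu by (simp add: power_mult_distrib)
      finally show ?thesis .
    qed
    have pos: "0 \<le> e * (?g \<bullet> (u - perp u))^2" using e by simp
    show "0 < Veps \<psi> pstar e p u"
      unfolding Veps_def using c1[of p] pu pos by simp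
    have "ereal (Veps \<psi> pstar e p u) < ereal (\<psi> pstar) - I"
    proof (cases I)
      case (real m)
      have gpos: "0 < (norm ?g)^2" using c5[of p] pu by simp
      have "m \<le> \<psi> (p - (1/(2*c)) *\<^sub>R ?g)" using Ilow real by simp
      also have "\<dots> \<le> \<psi> p - (norm ?g)^2 / (4*c)" by (rule descent2[OF sm hb c])
      finally have m: "m \<le> \<psi> p - (norm ?g)^2 / (4*c)" .
      have "e * (?g \<bullet> (u - perp u))^2 \<le> e * (2 * (norm ?g)^2)"
        using sq e by (intro mult_left_mono) auto
      also have "\<dots> < (1/(8*c)) * (2 * (norm ?g)^2)"
        using e gpos by (intro mult_strict_right_mono) auto
      also have "\<dots> = (norm ?g)^2 / (4*c)" using c by (simp add: field_simps)
      finally have "Veps \<psi> pstar e p u < \<psi> pstar - m"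
        unfolding Veps_def using m by simp
      then show ?thesis using real by simp
    next
      case PInf
      then show ?thesis using Ilow[of p] by simp
    next
      case MInf
      then show ?thesis by simp
    qed
    then show "ereal (Veps \<psi> pstar e p u) < ereal (\<psi> pstar) - Inf (range (\<lambda>p. ereal (\<psi> p)))"
      unfolding I_def .
  next
    fix e z :: real
    assume e: "0 < e \<and> e < 1/(8*c)"
      and z0: "0 < z \<and> ereal z < ereal (\<psi> pstar) - Inf (range (\<lambda>p. ereal (\<psi> p)))"
    have z: "0 < z" "ereal z < ereal (\<psi> pstar) - I" using z0 unfolding I_def by auto
    have Iz: "I < ereal (\<psi> pstar - z)"
    proof (cases I)
      case (real m)
      then show ?thesis using z by simp
    next
      case PInf
      then show ?thesis using Ilow[of p] by simp
    next
      case MInf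
      then show ?thesis by simp
    qed
    have K: "compact {p. \<psi> p \<ge> \<psi> pstar - z}"
      using c6[of "\<psi> pstar - z"] Iz z unfolding I_def by simp
    have "compact ({p. \<psi> p \<ge> \<psi> pstar - z} \<times> sphere (0::real^2) 1)"
      using K by (intro compact_Times) auto
    moreover have "closed {x::(real^2)\<times>(real^2). Veps \<psi> pstar e (fst x) (snd x) \<le> z}"
      using Veps_cont[OF sm, of pstar e] by (intro closed_Collect_le continuous_on_const) auto
    ultimately have "compact (({p. \<psi> p \<ge> \<psi> pstar - z} \<times> sphere (0::real^2) 1) \<inter>
        {x::(real^2)\<times>(real^2). Veps \<psi> pstar e (fst x) (snd x) \<le> z})"
      by (rule compact_Int_closed)
    moreover have "(({p. \<psi> p \<ge> \<psi> pstar - z} \<times> sphere (0::real^2) 1) \<inter>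
        {x::(real^2)\<times>(real^2). Veps \<psi> pstar e (fst x) (snd x) \<le> z})
       = {(p, u). u \<in> sphere 0 1 \<and> Veps \<psi> pstar e p u \<le> z}"
    proof -
      have h: "\<psi> pstar - \<psi> p \<le> Veps \<psi> pstar e p u" for p u
        unfolding Veps_def using e by simp
      show ?thesis
      proof (rule set_eqI)
        fix x :: "(real^2) \<times> (real^2)"
        obtain p u where x: "x = (p, u)" by (cases x)
        have "Veps \<psi> pstar e p u \<le> z \<Longrightarrow> \<psi> pstar - z \<le> \<psi> p" using h[of p u] by linarith
        then show "x \<in> ({p. \<psi> p \<ge> \<psi> pstar - z} \<times> sphere (0::real^2) 1) \<inter>
          {x::(real^2)\<times>(real^2). Veps \<psi> pstar e (fst x) (snd x) \<le> z} \<longleftrightarrow>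
          x \<in> {(p, u). u \<in> sphere 0 1 \<and> Veps \<psi> pstar e p u \<le> z}"
          unfolding x by auto
      qed
    qed
    ultimately show "compact {(p, u). u \<in> sphere 0 1 \<and> Veps \<psi> pstar e p u \<le> z}" by simp
  qed
qed

end
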